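(* Let $R$ be a ring with a linear Hausdorff topology, let $I$ be a well-ordered set, and let $\{e_i\}_{i\in I}$ be a summable family of idempotents with $e_ie_j=0$ whenever $i<j$. Put $e=\sum_{i\in I}e_i$. If $r\in R$ and $n\ge 1$ is an integer with $e^nr=0$, then $e_ir=0$ for all $i\in I$; in particular $er=0$.
   Context: A linear Hausdorff topology on a ring $R$ is a ring topology on $R$ having a basis $\mathfrak U$ of neighborhoods of $0$ consisting of left ideals, with $\bigcap_{U\in\mathfrak U}U=0$. A family $\{x_i\}_{i\in I}\subseteq R$ is summable to $r\in R$ if for every $U\in\mathfrak U$ there is a finite $F'\subseteq I$ with $\sum_{i\in F}x_i-r\in U$ for every finite $F$ with $F'\subseteq F\subseteq I$; one then writes $\sum_{i\in I}x_i=r$, and the family is called summable. *)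

theory Defs
  imports Main
begin

definition left_ideal :: "'a::ring_1 set \<Rightarrow> bool" where
  "left_ideal U \<longleftrightarrow> 0 \<in> U \<and> (\<forall>x\<in>U. \<forall>y\<in>U. x + y \<in> U) \<and> (\<forall>x\<in>U. - x \<in> U)
     \<and> (\<forall>a. \<forall>x\<in>U. a * x \<in> U)"

text \<open>A family of left ideals which is a basis of neighbourhoods of 0 for a
  linear ring topology (downward directed, nonempty, right multiplication
  continuous at 0), Hausdorff (intersection is 0).\<close>
definition linear_hausdorff_basis :: "'a::ring_1 set set \<Rightarrow> bool" where
  "linear_hausdorff_basis \<U> \<longleftrightarrow>
     \<U> \<noteq> {} \<and> (\<forall>U\<in>\<U>. left_ideal U)
     \<and> (\<forall>U\<in>\<U>. \<forall>V\<in>\<U>. \<exists>W\<in>\<U>. W \<subseteq> U \<inter> V)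
     \<and> (\<forall>U\<in>\<U>. \<forall>r. \<exists>V\<in>\<U>. (\<forall>v\<in>V. v * r \<in> U))
     \<and> \<Inter>\<U> = {0}"

definition lin_has_sum :: "'a::ring_1 set set \<Rightarrow> ('i \<Rightarrow> 'a) \<Rightarrow> 'i set \<Rightarrow> 'a \<Rightarrow> bool" where
  "lin_has_sum \<U> x I r \<longleftrightarrow>
     (\<forall>U\<in>\<U>. \<exists>F'. finite F' \<and> F' \<subseteq> I \<and>
        (\<forall>F. finite F \<and> F' \<subseteq> F \<and> F \<subseteq> I \<longrightarrow> sum x F - r \<in> U))"

end

theory Submission
  imports Defs
begin

lemma lhb_right:
  assumes B: "linear_hausdorff_basis \<U>" and U: "U \<in> \<U>"
  shows "\<exists>V\<in>\<U>. \<forall>v\<in>V. v * b \<in> U"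
  using B U unfolding linear_hausdorff_basis_def by blast

lemma lhb_ideal:
  assumes B: "linear_hausdorff_basis \<U>" and U: "U \<in> \<U>"
  shows "left_ideal U"
  using B U unfolding linear_hausdorff_basis_def by blast

lemma lhb_inter:
  assumes B: "linear_hausdorff_basis \<U>" shows "\<Inter>\<U> = {0}"
  using B unfolding linear_hausdorff_basis_def by blast

lemma li_mult: "left_ideal V \<Longrightarrow> x \<in> V \<Longrightarrow> a * x \<in> V"
  unfolding left_ideal_def by blast

lemma lhs_get:
  assumes "lin_has_sum \<U> f I c" "U \<in> \<U>"
  obtains F' where "finite F'" "F' \<subseteq> I"
    "\<And>F. finite F \<Longrightarrow> F' \<subseteq> F \<Longrightarrow> F \<subseteq> I \<Longrightarrow> sum f F - c \<in> U"
  using assms unfolding lin_has_sum_def by meson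

lemma lhs_mult:
  assumes B: "linear_hausdorff_basis \<U>" and S: "lin_has_sum \<U> e I s"
  shows "lin_has_sum \<U> (\<lambda>k. a * e k * b) I (a * s * b)"
  unfolding lin_has_sum_def
proof
  fix U assume U: "U \<in> \<U>"
  from lhb_right[OF B U] obtain V where V: "V \<in> \<U>" "\<And>v. v\<in>V \<Longrightarrow> v * b \<in> U"
    by blast
  from lhs_get[OF S V(1)] obtain F' where F': "finite F'" "F' \<subseteq> I"
    "\<And>F. finite F \<Longrightarrow> F' \<subseteq> F \<Longrightarrow> F \<subseteq> I \<Longrightarrow> sum e F - s \<in> V" by blast
  have li: "left_ideal V" using lhb_ideal[OF B V(1)] .
  show "\<exists>F'. finite F' \<and> F' \<subseteq> I \<and>
        (\<forall>F. finite F \<and> F' \<subseteq> F \<and> F \<subseteq> I \<longrightarrow> (\<Sum>k\<in>F. a * e k * b) - a * s * b \<in> U)"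
  proof (intro exI conjI allI impI)
    fix F assume F: "finite F \<and> F' \<subseteq> F \<and> F \<subseteq> I"
    have "sum e F - s \<in> V" using F F'(3) by simp
    hence "a * (sum e F - s) \<in> V" by (rule li_mult[OF li])
    hence "a * (sum e F - s) * b \<in> U" by (rule V(2))
    moreover have "a * (sum e F - s) * b = (\<Sum>k\<in>F. a * e k * b) - a * s * b"
      by (simp add: right_diff_distrib left_diff_distrib sum_distrib_left sum_distrib_right)
    ultimately show "(\<Sum>k\<in>F. a * e k * b) - a * s * b \<in> U" by simp
  qed (use F' in auto)
qed

lemma lhs_single:
  assumes B: "linear_hausdorff_basis \<U>" and S: "lin_has_sum \<U> f I c"
    and i: "i \<in> I" and Z: "\<forall>k\<in>I. k \<noteq> i \<longrightarrow> f k = 0"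
  shows "c = f i"
proof -
  have "\<forall>U\<in>\<U>. f i - c \<in> U"
  proof
    fix U assume U: "U \<in> \<U>"
    from lhs_get[OF S U] obtain F' where F': "finite F'" "F' \<subseteq> I"
      "\<And>F. finite F \<Longrightarrow> F' \<subseteq> F \<Longrightarrow> F \<subseteq> I \<Longrightarrow> sum f F - c \<in> U" by blast
    have "sum f (insert i F') - c \<in> U" using F' i by (intro F'(3)) auto
    moreover have "sum f (insert i F') = f i"
    proof -
      have "sum f (insert i F') = f i + sum f (F' - {i})"
        using F' by (simp add: sum.insert_remove)
      moreover have "sum f (F' - {i}) = 0" using Z F' by (intro sum.neutral) auto
      ultimately show ?thesis by simp
    qed
    ultimately show "f i - c \<in> U" by simp
  qed
  hence "f i - c \<in> \<Inter>\<U>" by blast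
  thus ?thesis using lhb_inter[OF B] by simp
qed

lemma lhs_zero:
  assumes B: "linear_hausdorff_basis \<U>" and S: "lin_has_sum \<U> f I c"
    and Z: "\<forall>k\<in>I. f k = 0"
  shows "c = 0"
proof -
  have "\<forall>U\<in>\<U>. - c \<in> U"
  proof
    fix U assume U: "U \<in> \<U>"
    from lhs_get[OF S U] obtain F' where F': "finite F'" "F' \<subseteq> I"
      "\<And>F. finite F \<Longrightarrow> F' \<subseteq> F \<Longrightarrow> F \<subseteq> I \<Longrightarrow> sum f F - c \<in> U" by blast
    have "sum f F' - c \<in> U" using F' by simp
    moreover have "sum f F' = 0" using Z F' by (intro sum.neutral) auto
    ultimately show "- c \<in> U" by simp
  qed
  hence "- c \<in> \<Inter>\<U>" by blast
  thus ?thesis using lhb_inter[OF B] by simp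
qed

theorem lemma5:
  fixes \<U> :: "'a::ring_1 set set"
    and I :: "'i::wellorder set"
    and e :: "'i \<Rightarrow> 'a" and s r :: 'a and n :: nat
  assumes "linear_hausdorff_basis \<U>"
    and "\<forall>i\<in>I. e i * e i = e i"
    and "\<forall>i\<in>I. \<forall>j\<in>I. i < j \<longrightarrow> e i * e j = 0"
    and "lin_has_sum \<U> e I s"
    and "n \<ge> 1"
    and "s ^ n * r = 0"
  shows "(\<forall>i\<in>I. e i * r = 0) \<and> s * r = 0"
proof -
  note B = assms(1) and idem = assms(2) and orth = assms(3) and S = assms(4)
  have main: "i \<in> I \<longrightarrow> e i * r = 0" for i
  proof (induction i rule: less_induct)
    case (less i)
    show ?case
    proof
      assume iI: "i \<in> I"
      have A: "\<forall>j\<in>I. j < i \<longrightarrow> e j * s ^ m * r = 0" for m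
      proof (induction m)
        case 0 thus ?case using less by simp
      next
        case (Suc m)
        show ?case
        proof (intro ballI impI)
          fix j assume j: "j \<in> I" "j < i"
          have L: "lin_has_sum \<U> (\<lambda>k. e j * e k * (s ^ m * r)) I (e j * s * (s ^ m * r))"
            by (rule lhs_mult[OF B S])
          have "\<forall>k\<in>I. e j * e k * (s ^ m * r) = 0"
          proof
            fix k assume k: "k \<in> I"
            show "e j * e k * (s ^ m * r) = 0"
            proof (cases "j < k")
              case True thus ?thesis using orth j k by simp
            next
              case False
              hence "k < i" using j by simp
              hence "e k * s ^ m * r = 0" using Suc k by blast
              thus ?thesis by (simp add: mult.assoc)
            qed
          qed
          from lhs_zero[OF B L this] show "e j * s ^ Suc m * r = 0"
            by (simp add: mult.assoc)
        qed
      qed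
      have Bm: "e i * s ^ m * r = e i * r" for m
      proof (induction m)
        case 0 thus ?case by simp
      next
        case (Suc m)
        have L: "lin_has_sum \<U> (\<lambda>k. e i * e k * (s ^ m * r)) I (e i * s * (s ^ m * r))"
          by (rule lhs_mult[OF B S])
        have "\<forall>k\<in>I. k \<noteq> i \<longrightarrow> e i * e k * (s ^ m * r) = 0"
        proof (intro ballI impI)
          fix k assume k: "k \<in> I" "k \<noteq> i"
          show "e i * e k * (s ^ m * r) = 0"
          proof (cases "i < k")
            case True thus ?thesis using orth iI k by simp
          next
            case False
            hence "k < i" using k by simp
            hence "e k * s ^ m * r = 0" using A k by blast
            thus ?thesis by (simp add: mult.assoc)
          qed
        qed
        from lhs_single[OF B L iI this]
        have "e i * s * (s ^ m * r) = e i * e i * (s ^ m * r)" .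
        also have "\<dots> = e i * s ^ m * r" using idem iI by (simp add: mult.assoc)
        finally show ?case using Suc by (simp add: mult.assoc)
      qed
      have "e i * r = e i * s ^ n * r" using Bm by simp
      also have "\<dots> = 0" using assms(6) by (simp add: mult.assoc)
      finally show "e i * r = 0" .
    qed
  qed
  have L: "lin_has_sum \<U> (\<lambda>k. 1 * e k * r) I (1 * s * r)"
    by (rule lhs_mult[OF B S])
  have "s * r = 0" using lhs_zero[OF B L] main by simp
  thus ?thesis using main by blast
qed

end
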